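(* For all positive integers $A,B$, with $n=A+B$, $$\mathrm{exa}_1(n,K_{A,B})=\binom{n}{2}-A-B+\mathrm{mup}(A,B).$$
   Context: $K_{A,B}$ is the complete bipartite graph with parts of sizes $A$ and $B$. For graphs $H,F$, $\mathcal N(H,F)$ is the number of subgraphs of $H$ isomorphic to $F$, and $\mathrm{exa}_1(n,F)$ is the largest number of edges of a simple graph $H$ on $n$ vertices with $\mathcal N(H,F)=1$. A unique partition of $A$ and $B$ consists of positive integers $A_1,\dots,A_a$ with $\sum_i A_i=A$ and $B_1,\dots,B_b$ with $\sum_j B_j=B$ such that, viewing these as $a+b$ indexed items, the only subsets of the items whose sum equals $A$ are the set of items $\{A_1,\dots,A_a\}$ and, in case $A=B$, also its complement $\{B_1,\dots,B_b\}$ (so e.g. $A_i\ne B_j$ is forced when $A\ne B$, while equal values among the $A_i$ are allowed). $\mathrm{mup}(A,B)$ is the maximum of $a+b$ over all unique partitions of $A$ and $B$, with the convention $\mathrm{mup}(1,1)=2$. *)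

theory Defs
  imports Main
begin

definition simple_graph :: "nat \<Rightarrow> nat set set \<Rightarrow> bool" where
  "simple_graph n E \<longleftrightarrow>
     E \<subseteq> {e. \<exists>x y. e = {x, y} \<and> x \<noteq> y \<and> x < n \<and> y < n}"

definition bip_edges :: "nat set \<Rightarrow> nat set \<Rightarrow> nat set set" where
  "bip_edges X Y = {{x, y} | x y. x \<in> X \<and> y \<in> Y}"

text \<open>Subgraphs of the graph (on {0..<n} with edges E) isomorphic to K_{A,B}.
  Since K_{A,B} (A,B >= 1) has no isolated vertices, such a subgraph is determined
  by its edge set.\<close>

definition KAB_copies :: "nat \<Rightarrow> nat set set \<Rightarrow> nat \<Rightarrow> nat \<Rightarrow> nat set set set" where
  "KAB_copies n E A B =
     {F. F \<subseteq> E \<and> (\<exists>X Y. X \<subseteq> {0..<n} \<and> Y \<subseteq> {0..<n} \<and> X \<inter> Y = {} \<and>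
                         card X = A \<and> card Y = B \<and> F = bip_edges X Y)}"

definition N_KAB :: "nat \<Rightarrow> nat set set \<Rightarrow> nat \<Rightarrow> nat \<Rightarrow> nat" where
  "N_KAB n E A B = card (KAB_copies n E A B)"

definition exa1_KAB :: "nat \<Rightarrow> nat \<Rightarrow> nat \<Rightarrow> nat" where
  "exa1_KAB n A B = Max {card E | E. simple_graph n E \<and> N_KAB n E A B = 1}"

definition unique_partition :: "nat \<Rightarrow> nat \<Rightarrow> nat list \<Rightarrow> nat list \<Rightarrow> bool" where
  "unique_partition A B xs ys \<longleftrightarrow>
     (\<forall>x\<in>set xs. x > 0) \<and> (\<forall>y\<in>set ys. y > 0) \<and>
     sum_list xs = A \<and> sum_list ys = B \<and>
     (\<forall>S \<subseteq> {0..<length xs + length ys}.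
        (\<Sum>i\<in>S. (xs @ ys) ! i) = A \<longrightarrow>
          S = {0..<length xs} \<or>
          (A = B \<and> S = {length xs..<length xs + length ys}))"

definition mup :: "nat \<Rightarrow> nat \<Rightarrow> nat" where
  "mup A B = (if A = 1 \<and> B = 1 then 2
              else Max {length xs + length ys | xs ys. unique_partition A B xs ys})"

end

theory Submission
  imports Defs
begin


definition allp :: "nat \<Rightarrow> nat set set" where
  "allp n = {e. \<exists>x y. e = {x, y} \<and> x \<noteq> y \<and> x < n \<and> y < n}"

definition cfree :: "nat set set \<Rightarrow> nat set \<Rightarrow> bool" where
  "cfree C X \<longleftrightarrow> (\<forall>e\<in>C. e \<subseteq> X \<or> e \<inter> X = {})"

lemma simple_graph_allp: "simple_graph n E \<longleftrightarrow> E \<subseteq> allp n"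
  by (simp add: simple_graph_def allp_def)

lemma card_allp: "card (allp n) = n choose 2"
proof -
  have "allp n = {e. e \<subseteq> {0..<n} \<and> card e = 2}"
  proof (rule set_eqI)
    fix e
    show "e \<in> allp n \<longleftrightarrow> e \<in> {e. e \<subseteq> {0..<n} \<and> card e = 2}"
    proof
      assume "e \<in> allp n"
      then obtain x y where "e = {x, y}" "x \<noteq> y" "x < n" "y < n" unfolding allp_def by blast
      then show "e \<in> {e. e \<subseteq> {0..<n} \<and> card e = 2}" by auto
    next
      assume "e \<in> {e. e \<subseteq> {0..<n} \<and> card e = 2}"
      then obtain x y where "e = {x, y}" "x \<noteq> y" "e \<subseteq> {0..<n}" by (auto simp: card_2_iff)
      then show "e \<in> allp n" unfolding allp_def by auto
    qed
  qed
  then show ?thesis by (simp add: n_subsets)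
qed

lemma finite_allp: "finite (allp n)"
proof -
  have "allp n \<subseteq> Pow {0..<n}" unfolding allp_def by auto
  then show ?thesis by (rule finite_subset) simp
qed

lemma bip_sym: "bip_edges X Y = bip_edges Y X"
  unfolding bip_edges_def by (auto simp: insert_commute)

lemma bip_pair:
  assumes "X \<inter> Y = {}"
  shows "{u, v} \<in> bip_edges X Y \<longleftrightarrow> (u \<in> X \<and> v \<in> Y) \<or> (u \<in> Y \<and> v \<in> X)"
  using assms unfolding bip_edges_def by (auto simp: doubleton_eq_iff)

lemma bip_eq:
  assumes "X \<noteq> {}" "Y \<noteq> {}" "X \<inter> Y = {}" "X' \<inter> Y' = {}"
    and eq: "bip_edges X Y = bip_edges X' Y'"
  shows "(X' = X \<and> Y' = Y) \<or> (X' = Y \<and> Y' = X)"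
proof -
  have key: "\<And>u v. (u \<in> X \<and> v \<in> Y) \<or> (u \<in> Y \<and> v \<in> X) \<longleftrightarrow> (u \<in> X' \<and> v \<in> Y') \<or> (u \<in> Y' \<and> v \<in> X')"
    using bip_pair[OF assms(3)] bip_pair[OF assms(4)] eq by metis
  obtain x0 y0 where x0: "x0 \<in> X" and y0: "y0 \<in> Y" using assms(1,2) by blast
  have "(x0 \<in> X' \<and> y0 \<in> Y') \<or> (x0 \<in> Y' \<and> y0 \<in> X')" using key x0 y0 by blast
  then show ?thesis
  proof
    assume h: "x0 \<in> X' \<and> y0 \<in> Y'"
    have "X' = X" using key[of _ y0] key[of x0] h x0 y0 assms(3,4) by blast
    moreover have "Y' = Y" using key[of _ y0] key[of x0] h x0 y0 assms(3,4) by blast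
    ultimately show ?thesis by blast
  next
    assume h: "x0 \<in> Y' \<and> y0 \<in> X'"
    have "X' = Y" using key[of _ y0] key[of x0] h x0 y0 assms(3,4) by blast
    moreover have "Y' = X" using key[of _ y0] key[of x0] h x0 y0 assms(3,4) by blast
    ultimately show ?thesis by blast
  qed
qed

lemma partition_exists:
  assumes "finite C" "finite V" "\<forall>e\<in>C. \<exists>x y. e = {x, y} \<and> x \<noteq> y \<and> x \<in> V \<and> y \<in> V"
  shows "\<exists>P. (\<forall>p\<in>P. p \<noteq> {} \<and> p \<subseteq> V) \<and> \<Union>P = V \<and> (\<forall>p\<in>P. \<forall>q\<in>P. p \<noteq> q \<longrightarrow> p \<inter> q = {})
     \<and> card V \<le> card P + card C \<and> (\<forall>e\<in>C. \<exists>p\<in>P. e \<subseteq> p)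
     \<and> (\<forall>X. cfree C X \<longrightarrow> (\<forall>p\<in>P. p \<subseteq> X \<or> p \<inter> X = {}))"
  using assms(1,3)
proof (induction C rule: finite_induct)
  case empty
  let ?P = "(\<lambda>v. {v}) ` V"
  have "card ?P = card V" by (rule card_image) (auto simp: inj_on_def)
  have a1: "\<forall>X. cfree {} X \<longrightarrow> (\<forall>p\<in>?P. p \<subseteq> X \<or> p \<inter> X = {})" by auto
  have a2: "\<forall>p\<in>?P. \<forall>q\<in>?P. p \<noteq> q \<longrightarrow> p \<inter> q = {}" by auto
  have a3: "\<forall>p\<in>?P. p \<noteq> {} \<and> p \<subseteq> V" by auto
  have a4: "\<Union>?P = V" by auto
  have a5: "card V \<le> card ?P + card {}" using \<open>card ?P = card V\<close> by simp
  have a6: "\<forall>e\<in>{}. \<exists>p\<in>?P. e \<subseteq> p" by simp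
  show ?case by (rule exI[of _ ?P]) (intro conjI a3 a4 a2 a5 a6 a1)
next
  case (insert e F)
  from insert.prems have eF: "\<forall>e\<in>F. \<exists>x y. e = {x, y} \<and> x \<noteq> y \<and> x \<in> V \<and> y \<in> V" by simp
  obtain P where P1: "\<forall>p\<in>P. p \<noteq> {} \<and> p \<subseteq> V" and P3: "\<Union>P = V"
    and P2: "\<forall>p\<in>P. \<forall>q\<in>P. p \<noteq> q \<longrightarrow> p \<inter> q = {}"
    and Pc: "card V \<le> card P + card F" and P4: "\<forall>e\<in>F. \<exists>p\<in>P. e \<subseteq> p"
    and P5: "\<forall>X. cfree F X \<longrightarrow> (\<forall>p\<in>P. p \<subseteq> X \<or> p \<inter> X = {})"
    using insert.IH[OF eF] by (elim exE conjE) (rule that)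
  have "\<exists>x y. e = {x, y} \<and> x \<noteq> y \<and> x \<in> V \<and> y \<in> V" using insert.prems by simp
  then obtain x y where e: "e = {x, y}" "x \<noteq> y" "x \<in> V" "y \<in> V" by blast
  have cardins: "card (insert e F) = Suc (card F)" using insert by simp
  have cf_mono: "\<And>X. cfree (insert e F) X \<Longrightarrow> cfree F X" by (simp add: cfree_def)
  show ?case
  proof (cases "\<exists>p\<in>P. e \<subseteq> p")
    case True
    show ?thesis
      apply (rule exI[of _ P])
      using P1 P2 P3 P4 P5 Pc True cardins cf_mono by auto
  next
    case False
    obtain p where p: "p \<in> P" "x \<in> p" using P3 e by blast
    obtain q where q: "q \<in> P" "y \<in> q" using P3 e by blast
    have pq: "p \<noteq> q"
    proof
      assume "p = q"
      then have "e \<subseteq> p" using e(1) p(2) q(2) by blast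
      then show False using False p(1) by blast
    qed
    define P' where "P' = insert (p \<union> q) (P - {p, q})"
    have notin: "p \<union> q \<notin> P - {p, q}"
    proof
      assume h: "p \<union> q \<in> P - {p, q}"
      have rP: "p \<union> q \<in> P" using h by (rule DiffD1)
      have rne: "p \<noteq> p \<union> q"
      proof
        assume "p = p \<union> q"
        then have "p \<union> q \<in> {p, q}" by simp
        then show False using h by simp
      qed
      have "p \<inter> (p \<union> q) = {}" using P2[rule_format, OF p(1) rP rne] .
      then show False using p by blast
    qed
    have finP: "finite P"
    proof -
      have "finite (\<Union>P)" using P3 assms(2) by simp
      then show ?thesis by (rule finite_UnionD)
    qed
    have "card (P - {p, q}) = card P - 2" using p q pq finP by (simp add: card_Diff_subset)
    moreover have "card P \<ge> 2"
    proof -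
      have "{p, q} \<subseteq> P" using p q by auto
      then have "card {p, q} \<le> card P" by (rule card_mono[OF finP])
      then show ?thesis using pq by simp
    qed
    moreover have "card P' = Suc (card (P - {p, q}))"
      unfolding P'_def using notin finP by simp
    ultimately have cP': "card P' + 1 = card P" by simp
    have Q1: "\<forall>r\<in>P'. r \<noteq> {} \<and> r \<subseteq> V" unfolding P'_def using P1 p q by auto
    have Q3: "\<Union>P' = V" unfolding P'_def using P3 p q by auto
    have Q2: "\<forall>r\<in>P'. \<forall>s\<in>P'. r \<noteq> s \<longrightarrow> r \<inter> s = {}"
    proof (intro ballI impI)
      fix r s assume r: "r \<in> P'" and s: "s \<in> P'" and rs: "r \<noteq> s"
      have d: "\<And>t u. t \<in> P \<Longrightarrow> u \<in> P \<Longrightarrow> t \<noteq> u \<Longrightarrow> t \<inter> u = {}" using P2 by blast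
      have dpq: "\<And>t. t \<in> P - {p, q} \<Longrightarrow> t \<inter> (p \<union> q) = {}"
      proof -
        fix t assume t: "t \<in> P - {p, q}"
        then have "t \<inter> p = {}" "t \<inter> q = {}" using d p(1) q(1) by auto
        then show "t \<inter> (p \<union> q) = {}" by blast
      qed
      show "r \<inter> s = {}"
      proof (cases "r = p \<union> q")
        case True
        then have "s \<in> P - {p, q}" using s rs unfolding P'_def by blast
        then show ?thesis using dpq True by blast
      next
        case False
        then have r': "r \<in> P - {p, q}" using r unfolding P'_def by blast
        show ?thesis
        proof (cases "s = p \<union> q")
          case True
          then show ?thesis using dpq[OF r'] by blast
        next
          case False
          then have "s \<in> P - {p, q}" using s unfolding P'_def by blast
          then show ?thesis using d r' rs by blast
        qed
      qed
    qed
    have Q4: "\<forall>e'\<in>insert e F. \<exists>r\<in>P'. e' \<subseteq> r"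
    proof
      fix e' assume "e' \<in> insert e F"
      then show "\<exists>r\<in>P'. e' \<subseteq> r"
      proof
        assume "e' = e" then show ?thesis unfolding P'_def using e p q by auto
      next
        assume "e' \<in> F"
        then obtain r where "r \<in> P" "e' \<subseteq> r" using P4 by blast
        then show ?thesis unfolding P'_def by (cases "r = p \<or> r = q") auto
      qed
    qed
    have Q5: "\<forall>X. cfree (insert e F) X \<longrightarrow> (\<forall>r\<in>P'. r \<subseteq> X \<or> r \<inter> X = {})"
    proof (intro allI impI ballI)
      fix X r assume cf: "cfree (insert e F) X" and r: "r \<in> P'"
      have blk: "\<forall>s\<in>P. s \<subseteq> X \<or> s \<inter> X = {}" using P5 cf_mono[OF cf] by blast
      have ee: "e \<subseteq> X \<or> e \<inter> X = {}" using cf unfolding cfree_def by blast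
      show "r \<subseteq> X \<or> r \<inter> X = {}"
      proof (cases "r = p \<union> q")
        case True
        have "p \<subseteq> X \<or> p \<inter> X = {}" "q \<subseteq> X \<or> q \<inter> X = {}" using blk p q by auto
        then show ?thesis using True ee e p q by blast
      next
        case False
        then have "r \<in> P" using r unfolding P'_def by auto
        then show ?thesis using blk by blast
      qed
    qed
    show ?thesis
      apply (rule exI[of _ P'])
      using Q1 Q2 Q3 Q4 Q5 cP' cardins Pc by auto
  qed
qed



lemma copies_char:
  assumes P1: "\<forall>p\<in>P. p \<noteq> {} \<and> p \<subseteq> {0..<n}"
    and P2: "\<forall>p\<in>P. \<forall>q\<in>P. p \<noteq> q \<longrightarrow> p \<inter> q = {}"
    and P3: "\<Union>P = {0..<n}"
    and P4: "\<forall>e\<in>C. \<exists>p\<in>P. e \<subseteq> p"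
    and P5: "\<forall>X. cfree C X \<longrightarrow> (\<forall>p\<in>P. p \<subseteq> X \<or> p \<inter> X = {})"
    and CS: "C \<subseteq> allp n" and nAB: "n = A + B"
  shows "F \<in> KAB_copies n (allp n - C) A B \<longleftrightarrow>
    (\<exists>S\<subseteq>P. card (\<Union>S) = A \<and> F = bip_edges (\<Union>S) ({0..<n} - \<Union>S))"
proof
  assume "F \<in> KAB_copies n (allp n - C) A B"
  then obtain X Y where FE: "F \<subseteq> allp n - C" and X: "X \<subseteq> {0..<n}" and Y: "Y \<subseteq> {0..<n}"
    and XY: "X \<inter> Y = {}" and cX: "card X = A" and cY: "card Y = B" and F: "F = bip_edges X Y"
    unfolding KAB_copies_def by blast
  have fX: "finite X" and fY: "finite Y" using X Y finite_subset by blast+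
  have "card (X \<union> Y) = n" using card_Un_disjoint[OF fX fY XY] cX cY nAB by simp
  then have XuY: "X \<union> Y = {0..<n}" using X Y by (intro card_subset_eq) auto
  then have Yeq: "Y = {0..<n} - X" using XY by blast
  have cf: "cfree C X" unfolding cfree_def
  proof
    fix e assume eC: "e \<in> C"
    have "e \<in> allp n" using CS eC by blast
    then obtain u v where e: "e = {u, v}" "u \<noteq> v" "u < n" "v < n" unfolding allp_def by blast
    show "e \<subseteq> X \<or> e \<inter> X = {}"
    proof (rule ccontr)
      assume "\<not> (e \<subseteq> X \<or> e \<inter> X = {})"
      moreover have "u \<in> X \<union> Y" "v \<in> X \<union> Y" using XuY e(3,4) by simp_all
      ultimately have "(u \<in> X \<and> v \<in> Y) \<or> (u \<in> Y \<and> v \<in> X)" using e(1) by blast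
      then have "e \<in> bip_edges X Y" using bip_pair[OF XY] e by simp
      then show False using FE F eC by blast
    qed
  qed
  define S where "S = {p\<in>P. p \<subseteq> X}"
  have US: "\<Union>S = X"
  proof
    show "\<Union>S \<subseteq> X" unfolding S_def by blast
  next
    show "X \<subseteq> \<Union>S"
    proof
      fix x assume xX: "x \<in> X"
      then obtain p where p: "p \<in> P" "x \<in> p" using X P3 by blast
      then have "p \<subseteq> X" using P5 cf xX by blast
      then show "x \<in> \<Union>S" unfolding S_def using p by blast
    qed
  qed
  show "\<exists>S\<subseteq>P. card (\<Union>S) = A \<and> F = bip_edges (\<Union>S) ({0..<n} - \<Union>S)"
    by (rule exI[of _ S]) (simp add: S_def[symmetric] US cX F Yeq, simp add: S_def)
next
  assume "\<exists>S\<subseteq>P. card (\<Union>S) = A \<and> F = bip_edges (\<Union>S) ({0..<n} - \<Union>S)"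
  then obtain S where SP: "S \<subseteq> P" and cU: "card (\<Union>S) = A" and F: "F = bip_edges (\<Union>S) ({0..<n} - \<Union>S)"
    by blast
  define U where "U = \<Union>S"
  have UV: "U \<subseteq> {0..<n}" unfolding U_def using SP P1 by blast
  have cW: "card ({0..<n} - U) = B" using card_Diff_subset[OF finite_subset[OF UV] UV] cU nAB
    unfolding U_def by simp
  have sub: "bip_edges U ({0..<n} - U) \<subseteq> allp n - C"
  proof
    fix e assume "e \<in> bip_edges U ({0..<n} - U)"
    then obtain x y where e: "e = {x, y}" "x \<in> U" "y \<in> {0..<n} - U" unfolding bip_edges_def by blast
    have "x \<noteq> y" "x < n" "y < n" using e UV by auto
    then have "e \<in> allp n" unfolding allp_def using e by blast
    moreover have "e \<notin> C"
    proof
      assume "e \<in> C"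
      then obtain p where p: "p \<in> P" "e \<subseteq> p" using P4 by blast
      obtain s where s: "s \<in> S" "x \<in> s" using e(2) unfolding U_def by blast
      have "s \<in> P" using s SP by blast
      then have "p = s" using P2 p s e by blast
      then have "y \<in> U" using p s e unfolding U_def by blast
      then show False using e by blast
    qed
    ultimately show "e \<in> allp n - C" by blast
  qed
  show "F \<in> KAB_copies n (allp n - C) A B"
    unfolding KAB_copies_def
    using sub UV cU cW F unfolding U_def by blast
qed



lemma card_Union_blocks:
  assumes "\<forall>p\<in>S. finite p" "\<forall>p\<in>S. \<forall>q\<in>S. p \<noteq> q \<longrightarrow> p \<inter> q = {}"
  shows "card (\<Union>S) = (\<Sum>p\<in>S. card p)"
proof (rule card_Union_disjoint)
  show "pairwise disjnt S" using assms(2) unfolding pairwise_def disjnt_def by blast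
  show "\<And>A. A \<in> S \<Longrightarrow> finite A" using assms(1) by blast
qed

lemma blk_sub:
  assumes "\<forall>p\<in>P. p \<noteq> {}" "\<forall>p\<in>P. \<forall>q\<in>P. p \<noteq> q \<longrightarrow> p \<inter> q = {}" "S \<subseteq> P" "p \<in> P"
  shows "p \<subseteq> \<Union>S \<longleftrightarrow> p \<in> S"
proof
  assume h: "p \<subseteq> \<Union>S"
  obtain x where x: "x \<in> p" using assms(1,4) by blast
  then obtain s where s: "s \<in> S" "x \<in> s" using h by blast
  have "s \<in> P" using s assms(3) by blast
  then have "p = s" using assms(2) assms(4) x s by blast
  then show "p \<in> S" using s by simp
qed blast

lemma idx_mem:
  assumes "distinct L" "i < length L" "I \<subseteq> {0..<length L}"
  shows "L ! i \<in> (!) L ` I \<longleftrightarrow> i \<in> I"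
proof
  assume "L ! i \<in> (!) L ` I"
  then obtain j where j: "j \<in> I" "L ! i = L ! j" by blast
  have jl: "j < length L" using j assms(3) by auto
  then have "i = j" using nth_eq_iff_index_eq[OF assms(1,2) jl] j by simp
  then show "i \<in> I" using j by simp
qed blast

lemma blocks_exist:
  "\<exists>L. map card L = zs \<and> (\<forall>i<length L. \<forall>j<length L. i \<noteq> j \<longrightarrow> L ! i \<inter> L ! j = {})
     \<and> \<Union>(set L) = {0..<sum_list zs}"
proof (induction zs rule: rev_induct)
  case Nil
  show ?case by (rule exI[of _ "[]"]) simp
next
  case (snoc z zs)
  obtain L where L1: "map card L = zs"
    and L2: "\<forall>i<length L. \<forall>j<length L. i \<noteq> j \<longrightarrow> L ! i \<inter> L ! j = {}"
    and L3: "\<Union>(set L) = {0..<sum_list zs}" using snoc.IH by blast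
  define m where "m = sum_list zs"
  define L' where "L' = L @ [{m..<m+z}]"
  have c1: "map card L' = zs @ [z]" using L1 unfolding L'_def by simp
  have sub: "\<And>i. i < length L \<Longrightarrow> L ! i \<subseteq> {0..<m}"
  proof -
    fix i assume "i < length L"
    then have "L ! i \<in> set L" by (rule nth_mem)
    then show "L ! i \<subseteq> {0..<m}" using L3 unfolding m_def by blast
  qed
  have nth': "\<And>i. i < length L' \<Longrightarrow> L' ! i = (if i < length L then L ! i else {m..<m+z})"
    unfolding L'_def by (simp add: nth_append)
  have c2: "\<forall>i<length L'. \<forall>j<length L'. i \<noteq> j \<longrightarrow> L' ! i \<inter> L' ! j = {}"
  proof (intro allI impI)
    fix i j assume i: "i < length L'" and j: "j < length L'" and ij: "i \<noteq> j"
    have lL: "length L' = Suc (length L)" unfolding L'_def by simp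
    show "L' ! i \<inter> L' ! j = {}"
    proof (cases "i < length L")
      case True
      note iT = True
      show ?thesis
      proof (cases "j < length L")
        case True
        then show ?thesis using L2 iT ij nth'[OF i] nth'[OF j] by simp
      next
        case False
        have "L' ! i \<subseteq> {0..<m}" using sub[OF iT] nth'[OF i] iT by simp
        moreover have "L' ! j = {m..<m+z}" using nth'[OF j] False by simp
        ultimately show ?thesis by auto
      qed
    next
      case False
      then have ii: "i = length L" using i lL by simp
      then have jj: "j < length L" using j lL ij by simp
      have "L' ! j \<subseteq> {0..<m}" using sub[OF jj] nth'[OF j] jj by simp
      moreover have "L' ! i = {m..<m+z}" using nth'[OF i] False by simp
      ultimately show ?thesis by auto
    qed
  qed
  have "\<Union>(set L') = {0..<m} \<union> {m..<m+z}" unfolding L'_def using L3 m_def by (simp add: Un_commute)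
  also have "\<dots> = {0..<sum_list (zs @ [z])}" unfolding m_def by auto
  finally have c3: "\<Union>(set L') = {0..<sum_list (zs @ [z])}" .
  show ?case using c1 c2 c3 by blast
qed

definition star :: "nat set \<Rightarrow> nat set set" where
  "star p = (\<lambda>v. {Min p, v}) ` (p - {Min p})"

lemma star_props:
  assumes P1: "\<forall>p\<in>P. p \<noteq> {} \<and> p \<subseteq> {0..<n}"
    and P2: "\<forall>p\<in>P. \<forall>q\<in>P. p \<noteq> q \<longrightarrow> p \<inter> q = {}"
    and P3: "\<Union>P = {0..<n}"
  shows "\<Union>(star ` P) \<subseteq> allp n" "\<forall>e\<in>\<Union>(star ` P). \<exists>p\<in>P. e \<subseteq> p"
    "\<forall>X. cfree (\<Union>(star ` P)) X \<longrightarrow> (\<forall>p\<in>P. p \<subseteq> X \<or> p \<inter> X = {})"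
    "card (\<Union>(star ` P)) + card P = n"
proof -
  have finP: "finite P"
  proof -
    have "finite (\<Union>P)" using P3 by simp
    then show ?thesis by (rule finite_UnionD)
  qed
  have finp: "\<And>p. p \<in> P \<Longrightarrow> finite p" using P1 finite_subset by blast
  have minp: "\<And>p. p \<in> P \<Longrightarrow> Min p \<in> p" using P1 finp Min_in by blast
  have starsub: "\<And>p e. p \<in> P \<Longrightarrow> e \<in> star p \<Longrightarrow> e \<subseteq> p"
    unfolding star_def using minp by blast
  show "\<Union>(star ` P) \<subseteq> allp n"
  proof
    fix e assume "e \<in> \<Union>(star ` P)"
    then obtain p v where p: "p \<in> P" "v \<in> p" "v \<noteq> Min p" "e = {Min p, v}" unfolding star_def by blast
    have pn: "p \<subseteq> {0..<n}" using P1 p(1) by blast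
    have "Min p < n" using minp[OF p(1)] pn by auto
    moreover have "v < n" using p(2) pn by auto
    ultimately show "e \<in> allp n" unfolding allp_def using p by blast
  qed
  show "\<forall>e\<in>\<Union>(star ` P). \<exists>p\<in>P. e \<subseteq> p" using starsub by blast
  show "\<forall>X. cfree (\<Union>(star ` P)) X \<longrightarrow> (\<forall>p\<in>P. p \<subseteq> X \<or> p \<inter> X = {})"
  proof (intro allI impI ballI)
    fix X p assume cf: "cfree (\<Union>(star ` P)) X" and p: "p \<in> P"
    have ed: "\<And>v. v \<in> p \<Longrightarrow> v \<noteq> Min p \<Longrightarrow> {Min p, v} \<subseteq> X \<or> {Min p, v} \<inter> X = {}"
    proof -
      fix v assume "v \<in> p" "v \<noteq> Min p"
      then have ein: "{Min p, v} \<in> \<Union>(star ` P)" unfolding star_def using p by blast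
      from cf[unfolded cfree_def] ein show "{Min p, v} \<subseteq> X \<or> {Min p, v} \<inter> X = {}" by (rule bspec)
    qed
    show "p \<subseteq> X \<or> p \<inter> X = {}"
    proof (cases "Min p \<in> X")
      case True
      have "p \<subseteq> X"
      proof
        fix v assume v: "v \<in> p"
        show "v \<in> X"
        proof (cases "v = Min p")
          case False
          then show ?thesis using ed[OF v False] True by auto
        qed (use True in simp)
      qed
      then show ?thesis by blast
    next
      case False
      have "p \<inter> X = {}"
      proof (rule ccontr)
        assume "p \<inter> X \<noteq> {}"
        then obtain v where v: "v \<in> p" "v \<in> X" by blast
        then have "v \<noteq> Min p" using False by blast
        then show False using ed[OF v(1)] v(2) False by blast
      qed
      then show ?thesis by blast
    qed
  qed
  have cstar: "\<And>p. p \<in> P \<Longrightarrow> card (star p) = card p - 1"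
  proof -
    fix p assume p: "p \<in> P"
    have "inj_on (\<lambda>v. {Min p, v}) (p - {Min p})" unfolding inj_on_def by (auto simp: doubleton_eq_iff)
    then have "card (star p) = card (p - {Min p})" unfolding star_def by (rule card_image)
    then show "card (star p) = card p - 1" using minp[OF p] finp[OF p] by simp
  qed
  have "card (\<Union>(star ` P)) = (\<Sum>p\<in>P. card (star p))"
  proof (rule card_UN_disjoint[OF finP])
    show "\<forall>p\<in>P. finite (star p)" unfolding star_def using finp by blast
    show "\<forall>p\<in>P. \<forall>q\<in>P. p \<noteq> q \<longrightarrow> star p \<inter> star q = {}"
    proof (intro ballI impI)
      fix p q assume p: "p \<in> P" and q: "q \<in> P" and pq: "p \<noteq> q"
      show "star p \<inter> star q = {}"
      proof (rule ccontr)
        assume "star p \<inter> star q \<noteq> {}"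
        then obtain e where e: "e \<in> star p" "e \<in> star q" by blast
        have "e \<noteq> {}" using e(1) unfolding star_def by blast
        moreover have "e \<subseteq> p \<inter> q" using starsub p q e by blast
        moreover have "p \<inter> q = {}" using P2 p q pq by blast
        ultimately show False by blast
      qed
    qed
  qed
  also have "\<dots> = (\<Sum>p\<in>P. card p - 1)" using cstar by simp
  also have "\<dots> = (\<Sum>p\<in>P. card p) - (\<Sum>p\<in>P. 1)"
  proof (rule sum_subtractf_nat)
    fix p assume "p \<in> P"
    then have "card p > 0" using P1 finp card_gt_0_iff by blast
    then show "1 \<le> card p" by simp
  qed
  finally have cC: "card (\<Union>(star ` P)) = (\<Sum>p\<in>P. card p) - card P" by simp
  have sP: "(\<Sum>p\<in>P. card p) = n"
    using card_Union_blocks[of P] finp P2 P3 by simp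
  have "card P \<le> (\<Sum>p\<in>P. card p)"
  proof -
    have "(\<Sum>p\<in>P. (1::nat)) \<le> (\<Sum>p\<in>P. card p)"
    proof (rule sum_mono)
      fix p assume "p \<in> P"
      then have "card p > 0" using P1 finp card_gt_0_iff by blast
      then show "1 \<le> card p" by simp
    qed
    then show ?thesis by simp
  qed
  then show "card (\<Union>(star ` P)) + card P = n" using cC sP by simp
qed



lemma lower:
  assumes A0: "A > 0" and B0: "B > 0" and nAB: "n = A + B" and up: "unique_partition A B xs ys"
  shows "\<exists>E. simple_graph n E \<and> N_KAB n E A B = 1 \<and> card E + n = (n choose 2) + (length xs + length ys)"
proof -
  define zs where "zs = xs @ ys"
  define a where "a = length xs"
  have pos: "\<forall>z\<in>set zs. z > 0" using up unfolding unique_partition_def zs_def by auto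
  have szs: "sum_list zs = n" using up nAB unfolding unique_partition_def zs_def by simp
  obtain L where L1: "map card L = zs"
    and L2: "\<forall>i<length L. \<forall>j<length L. i \<noteq> j \<longrightarrow> L ! i \<inter> L ! j = {}"
    and L3: "\<Union>(set L) = {0..<n}" using blocks_exist[of zs] szs by auto
  define k where "k = length L"
  have kz: "k = length zs" using L1 unfolding k_def by (metis length_map)
  have cardL: "\<And>i. i < k \<Longrightarrow> card (L ! i) = zs ! i"
  proof -
    fix i assume "i < k"
    then have "map card L ! i = card (L ! i)" unfolding k_def by (rule nth_map)
    then show "card (L ! i) = zs ! i" using L1 by simp
  qed
  have zpos: "\<And>i. i < k \<Longrightarrow> zs ! i > 0"
  proof -
    fix i assume "i < k"
    then have "zs ! i \<in> set zs" using kz by simp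
    then show "zs ! i > 0" using pos by blast
  qed
  have Lne: "\<And>i. i < k \<Longrightarrow> L ! i \<noteq> {}"
  proof -
    fix i assume i: "i < k"
    show "L ! i \<noteq> {}"
    proof
      assume "L ! i = {}"
      then have "card (L ! i) = 0" by simp
      then show False using cardL[OF i] zpos[OF i] by simp
    qed
  qed
  have dist: "distinct L"
    unfolding distinct_conv_nth
  proof (intro allI impI)
    fix i j assume i: "i < length L" and j: "j < length L" and ij: "i \<noteq> j"
    show "L ! i \<noteq> L ! j"
    proof
      assume eq: "L ! i = L ! j"
      have "L ! i \<inter> L ! j = {}" using L2 i j ij by blast
      then have "L ! i = {}" using eq by simp
      then show False using Lne i unfolding k_def by blast
    qed
  qed
  define P where "P = set L"
  have P1: "\<forall>p\<in>P. p \<noteq> {} \<and> p \<subseteq> {0..<n}"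
  proof
    fix p assume "p \<in> P"
    then obtain i where i: "i < k" "p = L ! i" unfolding P_def k_def by (auto simp: in_set_conv_nth)
    have "p \<noteq> {}" using Lne i by simp
    moreover have "p \<subseteq> {0..<n}" using L3 \<open>p \<in> P\<close> unfolding P_def by blast
    ultimately show "p \<noteq> {} \<and> p \<subseteq> {0..<n}" by blast
  qed
  have P2: "\<forall>p\<in>P. \<forall>q\<in>P. p \<noteq> q \<longrightarrow> p \<inter> q = {}"
  proof (intro ballI impI)
    fix p q assume p: "p \<in> P" and q: "q \<in> P" and pq: "p \<noteq> q"
    obtain i where i: "i < length L" "p = L ! i" using p unfolding P_def by (auto simp: in_set_conv_nth)
    obtain j where j: "j < length L" "q = L ! j" using q unfolding P_def by (auto simp: in_set_conv_nth)
    have "i \<noteq> j" using i j pq by blast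
    then show "p \<inter> q = {}" using L2 i j by blast
  qed
  have P3: "\<Union>P = {0..<n}" using L3 unfolding P_def .
  define C where "C = \<Union>(star ` P)"
  have CS: "C \<subseteq> allp n" and P4: "\<forall>e\<in>C. \<exists>p\<in>P. e \<subseteq> p"
    and P5: "\<forall>X. cfree C X \<longrightarrow> (\<forall>p\<in>P. p \<subseteq> X \<or> p \<inter> X = {})"
    and cC: "card C + card P = n"
    using star_props[OF P1 P2 P3] unfolding C_def by blast+
  have cP: "card P = k" using distinct_card[OF dist] unfolding P_def k_def .
  define E where "E = allp n - C"
  have sg: "simple_graph n E" by (simp add: simple_graph_allp E_def)
  have finC: "finite C" using CS finite_allp finite_subset by blast
  have cE: "card E = card (allp n) - card C" using card_Diff_subset[OF finC CS] unfolding E_def .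
  have "card C \<le> card (allp n)" using card_mono[OF finite_allp CS] .
  then have cardE: "card E + n = (n choose 2) + (length xs + length ys)"
    using cE cC cP card_allp[of n] kz unfolding zs_def by simp
  define X0 where "X0 = \<Union>(set (take a L))"
  define F0 where "F0 = bip_edges X0 ({0..<n} - X0)"
  have ak: "a \<le> k" using kz unfolding zs_def a_def by simp
  have char: "\<And>F. F \<in> KAB_copies n E A B \<longleftrightarrow>
      (\<exists>S\<subseteq>P. card (\<Union>S) = A \<and> F = bip_edges (\<Union>S) ({0..<n} - \<Union>S))"
    unfolding E_def by (rule copies_char[OF P1 P2 P3 P4 P5 CS nAB])
  have cardU: "\<And>S. S \<subseteq> P \<Longrightarrow> card (\<Union>S) = (\<Sum>p\<in>S. card p)"
  proof -
    fix S assume SP: "S \<subseteq> P"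
    have "\<forall>p\<in>S. finite p" using SP P1 finite_subset by blast
    moreover have "\<forall>p\<in>S. \<forall>q\<in>S. p \<noteq> q \<longrightarrow> p \<inter> q = {}" using SP P2 by blast
    ultimately show "card (\<Union>S) = (\<Sum>p\<in>S. card p)" by (rule card_Union_blocks)
  qed
  have sumI: "\<And>I. I \<subseteq> {0..<k} \<Longrightarrow> (\<Sum>i\<in>I. zs ! i) = card (\<Union>((!) L ` I))"
  proof -
    fix I assume I: "I \<subseteq> {0..<k}"
    have inj: "inj_on ((!) L) I" using I dist unfolding k_def by (intro inj_on_nth) auto
    have sub: "(!) L ` I \<subseteq> P" using I unfolding P_def k_def by auto
    have "card (\<Union>((!) L ` I)) = (\<Sum>p\<in>(!) L ` I. card p)" using cardU[OF sub] .
    also have "\<dots> = (\<Sum>i\<in>I. card (L ! i))" using sum.reindex[OF inj, of card] by simp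
    also have "\<dots> = (\<Sum>i\<in>I. zs ! i)"
    proof (rule sum.cong[OF refl])
      fix i assume "i \<in> I"
      then have "i < k" using I by auto
      then show "card (L ! i) = zs ! i" by (rule cardL)
    qed
    finally show "(\<Sum>i\<in>I. zs ! i) = card (\<Union>((!) L ` I))" by simp
  qed
  have takeimg: "(!) L ` {0..<a} = set (take a L)" using ak unfolding k_def by (rule nth_image)
  have X0V: "X0 \<subseteq> {0..<n}" unfolding X0_def using Union_mono[OF set_take_subset[of a L]] L3 by simp
  have upS: "\<forall>S\<subseteq>{0..<length xs + length ys}. (\<Sum>i\<in>S. (xs @ ys) ! i) = A \<longrightarrow>
       S = {0..<length xs} \<or> (A = B \<and> S = {length xs..<length xs + length ys})"
    using up unfolding unique_partition_def by (elim conjE) assumption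
  have copies: "KAB_copies n E A B = {F0}"
  proof (rule set_eqI, rule iffI)
    fix F assume "F \<in> KAB_copies n E A B"
    then obtain S where SP: "S \<subseteq> P" and cS: "card (\<Union>S) = A"
      and F: "F = bip_edges (\<Union>S) ({0..<n} - \<Union>S)" using char by blast
    define I where "I = {i. i < k \<and> L ! i \<in> S}"
    have SI: "S = (!) L ` I"
    proof
      show "S \<subseteq> (!) L ` I"
      proof
        fix p assume pS: "p \<in> S"
        then have "p \<in> set L" using SP unfolding P_def by blast
        then obtain i where "i < k" "p = L ! i" unfolding k_def by (auto simp: in_set_conv_nth)
        then show "p \<in> (!) L ` I" unfolding I_def using pS by blast
      qed
    qed (auto simp: I_def)
    have Isub: "I \<subseteq> {0..<length xs + length ys}" using kz unfolding I_def zs_def by auto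
    have "(\<Sum>i\<in>I. (xs @ ys) ! i) = A" using sumI[of I] Isub SI cS kz unfolding zs_def by simp
    then have cases: "I = {0..<a} \<or> (A = B \<and> I = {a..<k})"
      using upS Isub kz unfolding a_def zs_def by simp
    show "F \<in> {F0}"
    proof (cases "I = {0..<a}")
      case True
      then have "\<Union>S = X0" using SI takeimg unfolding X0_def by simp
      then show ?thesis using F unfolding F0_def by simp
    next
      case False
      then have Ia: "I = {a..<k}" using cases by simp
      have US: "\<Union>S = {0..<n} - X0"
      proof
        show "\<Union>S \<subseteq> {0..<n} - X0"
        proof
          fix x assume "x \<in> \<Union>S"
          then obtain j where j: "j \<in> {a..<k}" "x \<in> L ! j" using SI Ia by blast
          have "L ! j \<in> P" using j unfolding P_def k_def by simp
          then have xV: "x \<in> {0..<n}" using P1 j by blast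
          have "x \<notin> X0"
          proof
            assume "x \<in> X0"
            then obtain i where i: "i \<in> {0..<a}" "x \<in> L ! i" using takeimg unfolding X0_def by blast
            have "i \<noteq> j" using i j by simp
            moreover have "i < length L" "j < length L" using i j ak unfolding k_def by auto
            ultimately have "L ! i \<inter> L ! j = {}" using L2 by blast
            then show False using i j by blast
          qed
          then show "x \<in> {0..<n} - X0" using xV by blast
        qed
      next
        show "{0..<n} - X0 \<subseteq> \<Union>S"
        proof
          fix x assume x: "x \<in> {0..<n} - X0"
          then have "x \<in> \<Union>(set L)" using L3 by simp
          then obtain p where p: "p \<in> set L" "x \<in> p" by blast
          then obtain i where i0: "i < length L" "p = L ! i" by (auto simp: in_set_conv_nth)
          then have i: "i < k" "x \<in> L ! i" using p unfolding k_def by auto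
          have "\<not> i < a"
          proof
            assume "i < a"
            then have "L ! i \<in> set (take a L)" using takeimg by auto
            then show False using x i unfolding X0_def by blast
          qed
          then have "i \<in> I" using Ia i by simp
          then show "x \<in> \<Union>S" using SI i by blast
        qed
      qed
      have "{0..<n} - \<Union>S = X0" using US X0V by blast
      then have "F = bip_edges ({0..<n} - X0) X0" using F US by simp
      then show ?thesis unfolding F0_def using bip_sym by simp
    qed
  next
    fix F assume "F \<in> {F0}"
    then have F: "F = F0" by simp
    have sub: "set (take a L) \<subseteq> P" unfolding P_def by (rule set_take_subset)
    have "card (\<Union>(set (take a L))) = (\<Sum>p\<in>set (take a L). card p)" using cardU[OF sub] .
    also have "\<dots> = sum_list (map card (take a L))"
      using sum_list_distinct_conv_sum_set[OF distinct_take[OF dist], of card] by simp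
    also have "\<dots> = sum_list (take a zs)" using L1 by (metis take_map)
    also have "\<dots> = A" using up unfolding zs_def a_def unique_partition_def by simp
    finally have "card X0 = A" unfolding X0_def .
    then show "F \<in> KAB_copies n E A B" using char sub F unfolding F0_def X0_def by blast
  qed
  have "N_KAB n E A B = 1" unfolding N_KAB_def copies by simp
  then show ?thesis using sg cardE by blast
qed



lemma upper:
  assumes A0: "A > 0" and B0: "B > 0" and nAB: "n = A + B"
    and sg: "simple_graph n E" and N1: "N_KAB n E A B = 1"
  shows "\<exists>xs ys. unique_partition A B xs ys \<and> card E + n \<le> (n choose 2) + (length xs + length ys)"
proof -
  have Eall: "E \<subseteq> allp n" using sg simple_graph_allp by simp
  define C where "C = allp n - E"
  have EC: "E = allp n - C" using Eall unfolding C_def by blast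
  have CS: "C \<subseteq> allp n" unfolding C_def by blast
  have finC: "finite C" using CS finite_allp finite_subset by blast
  have Cedges: "\<forall>e\<in>C. \<exists>x y. e = {x, y} \<and> x \<noteq> y \<and> x \<in> {0..<n} \<and> y \<in> {0..<n}"
  proof
    fix e assume "e \<in> C"
    then have "e \<in> allp n" using CS by blast
    then obtain x y where "e = {x, y}" "x \<noteq> y" "x < n" "y < n" unfolding allp_def by blast
    then show "\<exists>x y. e = {x, y} \<and> x \<noteq> y \<and> x \<in> {0..<n} \<and> y \<in> {0..<n}" by auto
  qed
  obtain P where P1: "\<forall>p\<in>P. p \<noteq> {} \<and> p \<subseteq> {0..<n}" and P3: "\<Union>P = {0..<n}"
    and P2: "\<forall>p\<in>P. \<forall>q\<in>P. p \<noteq> q \<longrightarrow> p \<inter> q = {}"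
    and Pc: "card {0..<n} \<le> card P + card C" and P4: "\<forall>e\<in>C. \<exists>p\<in>P. e \<subseteq> p"
    and P5: "\<forall>X. cfree C X \<longrightarrow> (\<forall>p\<in>P. p \<subseteq> X \<or> p \<inter> X = {})"
    using partition_exists[OF finC finite_atLeastLessThan Cedges] by (elim exE conjE) (rule that)
  have finP: "finite P"
  proof -
    have "finite (\<Union>P)" using P3 by simp
    then show ?thesis by (rule finite_UnionD)
  qed
  have Pne: "\<forall>p\<in>P. p \<noteq> {}" using P1 by blast
  have Pfin: "\<And>p. p \<in> P \<Longrightarrow> finite p" using P1 finite_subset by blast
  have char: "\<And>F. F \<in> KAB_copies n E A B \<longleftrightarrow>
      (\<exists>S\<subseteq>P. card (\<Union>S) = A \<and> F = bip_edges (\<Union>S) ({0..<n} - \<Union>S))"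
    unfolding EC by (rule copies_char[OF P1 P2 P3 P4 P5 CS nAB])
  have cardU: "\<And>S. S \<subseteq> P \<Longrightarrow> card (\<Union>S) = (\<Sum>p\<in>S. card p)"
  proof -
    fix S assume SP: "S \<subseteq> P"
    have "\<forall>p\<in>S. finite p" using SP Pfin by blast
    moreover have "\<forall>p\<in>S. \<forall>q\<in>S. p \<noteq> q \<longrightarrow> p \<inter> q = {}" using SP P2 by blast
    ultimately show "card (\<Union>S) = (\<Sum>p\<in>S. card p)" by (rule card_Union_blocks)
  qed
  have "card (KAB_copies n E A B) = Suc 0" using N1 unfolding N_KAB_def by simp
  then obtain F0 where cop: "KAB_copies n E A B = {F0}" by (auto simp: card_1_singleton_iff)
  then have "F0 \<in> KAB_copies n E A B" by simp
  then obtain S0 where S0P: "S0 \<subseteq> P" and cS0: "card (\<Union>S0) = A"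
    and F0: "F0 = bip_edges (\<Union>S0) ({0..<n} - \<Union>S0)" using char by blast
  define U0 where "U0 = \<Union>S0"
  have U0V: "U0 \<subseteq> {0..<n}" unfolding U0_def using S0P P1 by blast
  have compl: "\<Union>(P - S0) = {0..<n} - U0"
  proof
    show "\<Union>(P - S0) \<subseteq> {0..<n} - U0"
    proof
      fix x assume "x \<in> \<Union>(P - S0)"
      then obtain p where p: "p \<in> P" "p \<notin> S0" "x \<in> p" by blast
      have xV: "x \<in> {0..<n}" using p P1 by blast
      have "x \<notin> U0"
      proof
        assume "x \<in> U0"
        then obtain s where s: "s \<in> S0" "x \<in> s" unfolding U0_def by blast
        have "s \<in> P" using s S0P by blast
        then have "p = s" using P2 p s by blast
        then show False using p s by simp
      qed
      then show "x \<in> {0..<n} - U0" using xV by blast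
    qed
  next
    show "{0..<n} - U0 \<subseteq> \<Union>(P - S0)"
    proof
      fix x assume x: "x \<in> {0..<n} - U0"
      then obtain p where p: "p \<in> P" "x \<in> p" using P3 by blast
      have "p \<notin> S0" using p x unfolding U0_def by blast
      then show "x \<in> \<Union>(P - S0)" using p by blast
    qed
  qed
  have cU0c: "card ({0..<n} - U0) = B"
    using card_Diff_subset[OF finite_subset[OF U0V] U0V] cS0 nAB unfolding U0_def by simp
  obtain LX where LX: "set LX = S0" "distinct LX"
    using finite_distinct_list[OF finite_subset[OF S0P finP]] by blast
  obtain LY where LY: "set LY = P - S0" "distinct LY"
    using finite_distinct_list[of "P - S0"] finP by blast
  define L where "L = LX @ LY"
  have dist: "distinct L" unfolding L_def using LX LY by auto
  have setL: "set L = P" unfolding L_def using LX LY S0P by auto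
  define xs where "xs = map card LX"
  define ys where "ys = map card LY"
  define a where "a = length LX"
  define k where "k = length L"
  have xsys: "xs @ ys = map card L" unfolding xs_def ys_def L_def by simp
  have lenk: "length xs + length ys = k" unfolding xs_def ys_def k_def L_def by simp
  have la: "length xs = a" unfolding xs_def a_def by simp
  have LiP: "\<And>i. i < k \<Longrightarrow> L ! i \<in> P" using setL unfolding k_def by auto
  have LS0: "\<And>i. i < k \<Longrightarrow> L ! i \<in> S0 \<longleftrightarrow> i < a"
  proof -
    fix i assume i: "i < k"
    show "L ! i \<in> S0 \<longleftrightarrow> i < a"
    proof (cases "i < a")
      case True
      then have "L ! i = LX ! i" unfolding L_def a_def by (simp add: nth_append)
      then have "L ! i \<in> set LX" using True unfolding a_def by simp
      then show ?thesis using True LX by simp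
    next
      case False
      then have "L ! i = LY ! (i - a)" unfolding L_def a_def by (simp add: nth_append)
      moreover have "i - a < length LY" using i False unfolding k_def L_def a_def by simp
      ultimately have "L ! i \<in> set LY" by simp
      then show ?thesis using False LY by simp
    qed
  qed
  have sub_U0: "\<And>i. i < k \<Longrightarrow> L ! i \<subseteq> U0 \<longleftrightarrow> i < a"
    using blk_sub[OF Pne P2 S0P LiP] LS0 unfolding U0_def by simp
  have sub_W: "\<And>i. i < k \<Longrightarrow> L ! i \<subseteq> {0..<n} - U0 \<longleftrightarrow> \<not> i < a"
  proof -
    fix i assume i: "i < k"
    have "L ! i \<subseteq> \<Union>(P - S0) \<longleftrightarrow> L ! i \<in> P - S0"
      using blk_sub[OF Pne P2 _ LiP[OF i], of "P - S0"] by blast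
    then show "L ! i \<subseteq> {0..<n} - U0 \<longleftrightarrow> \<not> i < a" using compl LS0[OF i] LiP[OF i] by simp
  qed
  have posP: "\<And>p. p \<in> P \<Longrightarrow> card p > 0" using Pne Pfin card_gt_0_iff by blast
  have up: "unique_partition A B xs ys"
    unfolding unique_partition_def
  proof (intro conjI)
    show "\<forall>x\<in>set xs. 0 < x" unfolding xs_def using LX S0P posP by auto
    show "\<forall>y\<in>set ys. 0 < y" unfolding ys_def using LY posP by auto
    show "sum_list xs = A"
      unfolding xs_def using sum_list_distinct_conv_sum_set[OF LX(2), of card] LX(1) cardU[OF S0P] cS0 by simp
    have "sum_list ys = (\<Sum>p\<in>P - S0. card p)"
      unfolding ys_def using sum_list_distinct_conv_sum_set[OF LY(2), of card] LY(1) by simp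
    also have "\<dots> = card (\<Union>(P - S0))" using cardU[of "P - S0"] by simp
    also have "\<dots> = B" using compl cU0c by simp
    finally show "sum_list ys = B" .
    show "\<forall>S\<subseteq>{0..<length xs + length ys}. (\<Sum>i\<in>S. (xs @ ys) ! i) = A \<longrightarrow>
        S = {0..<length xs} \<or> A = B \<and> S = {length xs..<length xs + length ys}"
    proof (intro allI impI)
      fix I assume I: "I \<subseteq> {0..<length xs + length ys}" and sI: "(\<Sum>i\<in>I. (xs @ ys) ! i) = A"
      have Ik: "I \<subseteq> {0..<k}" using I lenk by simp
      define S where "S = (!) L ` I"
      have SP: "S \<subseteq> P" unfolding S_def using Ik LiP by auto
      have inj: "inj_on ((!) L) I" using Ik dist unfolding k_def by (intro inj_on_nth) auto
      have "card (\<Union>S) = (\<Sum>p\<in>S. card p)" using cardU[OF SP] .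
      also have "\<dots> = (\<Sum>i\<in>I. card (L ! i))" unfolding S_def using sum.reindex[OF inj, of card] by simp
      also have "\<dots> = (\<Sum>i\<in>I. (xs @ ys) ! i)"
      proof (rule sum.cong[OF refl])
        fix i assume "i \<in> I"
        then have "i < length L" using Ik unfolding k_def by auto
        then show "card (L ! i) = (xs @ ys) ! i" unfolding xsys by simp
      qed
      finally have cS: "card (\<Union>S) = A" using sI by simp
      have "bip_edges (\<Union>S) ({0..<n} - \<Union>S) \<in> KAB_copies n E A B" using char SP cS by blast
      then have beq: "bip_edges U0 ({0..<n} - U0) = bip_edges (\<Union>S) ({0..<n} - \<Union>S)"
        using cop F0 unfolding U0_def by simp
      have U0ne: "U0 \<noteq> {}"
      proof
        assume "U0 = {}"
        then have "card U0 = 0" by simp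
        then show False using cS0 A0 unfolding U0_def by simp
      qed
      have Wne: "{0..<n} - U0 \<noteq> {}"
      proof
        assume "{0..<n} - U0 = {}"
        then have "card ({0..<n} - U0) = 0" by (simp only: card.empty)
        then show False using cU0c B0 by simp
      qed
      have memI: "\<And>i. i < k \<Longrightarrow> i \<in> I \<longleftrightarrow> L ! i \<subseteq> \<Union>S"
      proof -
        fix i assume i: "i < k"
        have "L ! i \<subseteq> \<Union>S \<longleftrightarrow> L ! i \<in> S" by (rule blk_sub[OF Pne P2 SP LiP[OF i]])
        also have "\<dots> \<longleftrightarrow> i \<in> I" unfolding S_def using idx_mem[OF dist _ Ik[unfolded k_def]] i
          unfolding k_def by simp
        finally show "i \<in> I \<longleftrightarrow> L ! i \<subseteq> \<Union>S" by simp
      qed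
      have "(\<Union>S = U0 \<and> {0..<n} - \<Union>S = {0..<n} - U0) \<or> (\<Union>S = {0..<n} - U0 \<and> {0..<n} - \<Union>S = U0)"
        using bip_eq[OF U0ne Wne _ _ beq] by blast
      then show "I = {0..<length xs} \<or> A = B \<and> I = {length xs..<length xs + length ys}"
      proof
        assume h: "\<Union>S = U0 \<and> {0..<n} - \<Union>S = {0..<n} - U0"
        have "I = {0..<a}"
        proof (rule set_eqI)
          fix i
          show "i \<in> I \<longleftrightarrow> i \<in> {0..<a}"
          proof (cases "i < k")
            case True
            then show ?thesis using memI[OF True] sub_U0[OF True] h by simp
          next
            case False
            then show ?thesis using Ik lenk la by auto
          qed
        qed
        then show ?thesis using la by simp
      next
        assume h: "\<Union>S = {0..<n} - U0 \<and> {0..<n} - \<Union>S = U0"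
        have AB: "A = B" using cS cU0c h by simp
        have "I = {a..<k}"
        proof (rule set_eqI)
          fix i
          show "i \<in> I \<longleftrightarrow> i \<in> {a..<k}"
          proof (cases "i < k")
            case True
            then show ?thesis using memI[OF True] sub_W[OF True] h by auto
          next
            case False
            then show ?thesis using Ik by auto
          qed
        qed
        then show ?thesis using AB la lenk by simp
      qed
    qed
  qed
  have cE: "card E = card (allp n) - card C" using card_Diff_subset[OF finC CS] unfolding EC .
  have "card C \<le> card (allp n)" using card_mono[OF finite_allp CS] .
  moreover have "card P = k" using distinct_card[OF dist] setL unfolding k_def by simp
  ultimately have "card E + n \<le> (n choose 2) + (length xs + length ys)"
    using cE Pc lenk card_allp[of n] by simp
  then show ?thesis using up by blast
qed



lemma len_le_sum: "\<forall>x\<in>set xs. x > 0 \<Longrightarrow> length xs \<le> sum_list (xs :: nat list)"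
  by (induction xs) auto

lemma up_len: "unique_partition A B xs ys \<Longrightarrow> length xs + length ys \<le> A + B"
proof -
  assume up: "unique_partition A B xs ys"
  have "length xs \<le> sum_list xs" using up unfolding unique_partition_def by (intro len_le_sum) blast
  moreover have "length ys \<le> sum_list ys" using up unfolding unique_partition_def by (intro len_le_sum) blast
  ultimately show ?thesis using up unfolding unique_partition_def by simp
qed

lemma up_AB:
  assumes "A > 0" "B > 0"
  shows "unique_partition A B [A] [B]"
  unfolding unique_partition_def
proof (intro conjI allI impI)
  show "\<forall>x\<in>set [A]. 0 < x" using assms by simp
  show "\<forall>y\<in>set [B]. 0 < y" using assms by simp
  show "sum_list [A] = A" by simp
  show "sum_list [B] = B" by simp
  fix S assume S: "S \<subseteq> {0..<length [A] + length [B]}" and sS: "(\<Sum>i\<in>S. ([A] @ [B]) ! i) = A"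
  have "S \<in> Pow {0, 1}" using S by auto
  moreover have "Pow {0::nat, 1} = {{}, {0}, {1}, {0, 1}}" by (auto simp: Pow_insert)
  ultimately have "S = {} \<or> S = {0} \<or> S = {1} \<or> S = {0, 1}" by blast
  then show "S = {0..<length [A]} \<or> A = B \<and> S = {length [A]..<length [A] + length [B]}"
    using sS assms by auto
qed

lemma finite_M: "finite {length xs + length ys |xs ys. unique_partition A B xs ys}"
proof (rule finite_subset)
  show "{length xs + length ys |xs ys. unique_partition A B xs ys} \<subseteq> {..A + B}"
    using up_len by auto
qed simp

lemma mup_ge: "unique_partition A B xs ys \<Longrightarrow> length xs + length ys \<le> mup A B"
proof -
  assume up: "unique_partition A B xs ys"
  show ?thesis
  proof (cases "A = 1 \<and> B = 1")
    case True
    then show ?thesis using up_len[OF up] unfolding mup_def by simp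
  next
    case False
    then show ?thesis unfolding mup_def using up by (auto intro!: Max_ge finite_M)
  qed
qed

lemma mup_att:
  assumes "A > 0" "B > 0"
  shows "\<exists>xs ys. unique_partition A B xs ys \<and> length xs + length ys = mup A B"
proof (cases "A = 1 \<and> B = 1")
  case True
  then show ?thesis using up_AB[OF assms] unfolding mup_def by force
next
  case False
  have ne: "{length xs + length ys |xs ys. unique_partition A B xs ys} \<noteq> {}"
    using up_AB[OF assms] by blast
  have "Max {length xs + length ys |xs ys. unique_partition A B xs ys}
      \<in> {length xs + length ys |xs ys. unique_partition A B xs ys}"
    by (rule Max_in[OF finite_M ne])
  then obtain xs ys where h: "unique_partition A B xs ys"
    "Max {length xs + length ys |xs ys. unique_partition A B xs ys} = length xs + length ys" by blast
  have "mup A B = Max {length xs + length ys |xs ys. unique_partition A B xs ys}"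
    unfolding mup_def by (rule if_not_P[OF False])
  then have "mup A B = length xs + length ys" using h(2) by simp
  then show ?thesis using h(1) by metis
qed

theorem proposition3p1:
  fixes A B n :: nat
  assumes "A > 0" and "B > 0" and "n = A + B"
  shows "int (exa1_KAB n A B) = int (n choose 2) - int A - int B + int (mup A B)"
proof -
  obtain xs ys where up: "unique_partition A B xs ys" and lm: "length xs + length ys = mup A B"
    using mup_att[OF assms(1,2)] by blast
  obtain E0 where E0: "simple_graph n E0" "N_KAB n E0 A B = 1"
    and cE0: "card E0 + n = (n choose 2) + mup A B"
    using lower[OF assms up] lm by auto
  let ?S = "{card E |E. simple_graph n E \<and> N_KAB n E A B = 1}"
  have bound: "\<And>E. simple_graph n E \<Longrightarrow> N_KAB n E A B = 1 \<Longrightarrow> card E + n \<le> (n choose 2) + mup A B"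
  proof -
    fix E assume "simple_graph n E" "N_KAB n E A B = 1"
    then obtain xs' ys' where "unique_partition A B xs' ys'"
      and "card E + n \<le> (n choose 2) + (length xs' + length ys')"
      using upper[OF assms] by blast
    then show "card E + n \<le> (n choose 2) + mup A B" using mup_ge by fastforce
  qed
  have fin: "finite ?S"
  proof (rule finite_subset)
    show "?S \<subseteq> {..(n choose 2) + mup A B}" using bound by fastforce
  qed simp
  have "Max ?S = card E0"
  proof (rule Max_eqI[OF fin])
    fix y assume "y \<in> ?S"
    then obtain E where "y = card E" "simple_graph n E" "N_KAB n E A B = 1" by blast
    then show "y \<le> card E0" using bound cE0 by fastforce
  next
    show "card E0 \<in> ?S" using E0 by blast
  qed
  then have ex: "exa1_KAB n A B = card E0" unfolding exa1_KAB_def by simp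
  have "int (card E0) + int A + int B = int (n choose 2) + int (mup A B)"
    using cE0 assms(3) by (metis of_nat_add add.assoc)
  then show ?thesis using ex by linarith
qed

end
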